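(* Let $P^0_0,\dots,P^0_3\in\{z=0\}$ and $P^1_0,\dots,P^1_3\in\{z=1\}$ be points in $\mathbb{R}^3$, and for $u\in[0,1]$ set $P^u_j=(1-u)P^0_j+uP^1_j$ (viewed as points of the plane $\{z=u\}\cong\mathbb{R}^2$). Assume $$J:=\min_{0\le j\le3,\;u\in[0,1]}\bigl[\overrightarrow{P^u_jP^u_{j+1}},\overrightarrow{P^u_jP^u_{j-1}}\bigr]>0$$ (indices mod $4$, $[v,w]:=\det(v,w)$ for planar vectors). For $u\in\{0,1\}$ and $s,t\in[0,1]$ let $v^u(t)=(1-t)\overrightarrow{P^u_0P^u_1}+t\overrightarrow{P^u_3P^u_2}$, $w^u(s)=(1-s)\overrightarrow{P^u_0P^u_3}+s\overrightarrow{P^u_1P^u_2}$, $Q^u(s,t)=P^u_0+s\,v^u(0)+t\,w^u(s)$. Then the map $B\colon[0,1]^3\to\mathbb{R}^3$, $B(s,t,u)=(1-u)Q^0(s,t)+uQ^1(s,t)$, is bi-Lipschitz onto its image. *)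

theory Defs
  imports "HOL-Analysis.Analysis"
begin

type_synonym pt3 = "real \<times> real \<times> real"

definition xc :: "pt3 \<Rightarrow> real" where "xc p = fst p"
definition yc :: "pt3 \<Rightarrow> real" where "yc p = fst (snd p)"
definition zc :: "pt3 \<Rightarrow> real" where "zc p = snd (snd p)"

text \<open>Planar determinant [v,w] of the (x,y)-parts of two vectors (the points
  lie in a horizontal plane z = u, identified with R^2).\<close>
definition pdet :: "pt3 \<Rightarrow> pt3 \<Rightarrow> real" where
  "pdet v w = xc v * yc w - yc v * xc w"

definition Pu :: "(nat \<Rightarrow> pt3) \<Rightarrow> (nat \<Rightarrow> pt3) \<Rightarrow> real \<Rightarrow> nat \<Rightarrow> pt3" where
  "Pu P0 P1 u j = (1 - u) *\<^sub>R P0 j + u *\<^sub>R P1 j"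

definition Jmin :: "(nat \<Rightarrow> pt3) \<Rightarrow> (nat \<Rightarrow> pt3) \<Rightarrow> real" where
  "Jmin P0 P1 = Inf {pdet (Pu P0 P1 u ((j + 1) mod 4) - Pu P0 P1 u j)
                          (Pu P0 P1 u ((j + 3) mod 4) - Pu P0 P1 u j)
                     | j u. j \<le> 3 \<and> u \<in> {0..1}}"

definition vq :: "(nat \<Rightarrow> pt3) \<Rightarrow> real \<Rightarrow> pt3" where
  "vq P t = (1 - t) *\<^sub>R (P 1 - P 0) + t *\<^sub>R (P 2 - P 3)"
definition wq :: "(nat \<Rightarrow> pt3) \<Rightarrow> real \<Rightarrow> pt3" where
  "wq P s = (1 - s) *\<^sub>R (P 3 - P 0) + s *\<^sub>R (P 2 - P 1)"
definition Qq :: "(nat \<Rightarrow> pt3) \<Rightarrow> real \<Rightarrow> real \<Rightarrow> pt3" where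
  "Qq P s t = P 0 + s *\<^sub>R vq P 0 + t *\<^sub>R wq P s"

definition Bmap :: "(nat \<Rightarrow> pt3) \<Rightarrow> (nat \<Rightarrow> pt3) \<Rightarrow> pt3 \<Rightarrow> pt3" where
  "Bmap P0 P1 x = (case x of (s, t, u) \<Rightarrow> (1 - u) *\<^sub>R Qq P0 s t + u *\<^sub>R Qq P1 s t)"

definition bi_lipschitz_on :: "'a::metric_space set \<Rightarrow> ('a \<Rightarrow> 'b::metric_space) \<Rightarrow> bool" where
  "bi_lipschitz_on S f \<longleftrightarrow> (\<exists>L>0. \<forall>x\<in>S. \<forall>y\<in>S.
      dist x y \<le> L * dist (f x) (f y) \<and> dist (f x) (f y) \<le> L * dist x y)"

end

theory Submission imports Defs begin

lemma coord_lin [simp]: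
  "xc (a + b) = xc a + xc b" "yc (a + b) = yc a + yc b" "zc (a + b) = zc a + zc b"
  "xc (a - b) = xc a - xc b" "yc (a - b) = yc a - yc b" "zc (a - b) = zc a - zc b"
  "xc (c *\<^sub>R a) = c * xc a" "yc (c *\<^sub>R a) = c * yc a" "zc (c *\<^sub>R a) = c * zc a"
  by (auto simp: xc_def yc_def zc_def)

lemma coord_le: "\<bar>xc p\<bar> \<le> norm p" "\<bar>yc p\<bar> \<le> norm p" "\<bar>zc p\<bar> \<le> norm p"
proof -
  obtain a b c where p: "p = (a,b,c)" by (cases p) auto
  show "\<bar>xc p\<bar> \<le> norm p" using norm_fst_le[of a "(b,c)"] by (simp add: p xc_def)
  show "\<bar>yc p\<bar> \<le> norm p" using norm_fst_le[of b c] norm_snd_le[of "(b,c)" a] by (simp add: p yc_def)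
  show "\<bar>zc p\<bar> \<le> norm p" using norm_snd_le[of c b] norm_snd_le[of "(b,c)" a] by (simp add: p zc_def)
qed

lemma norm3_le: "norm ((a::real,b::real,c::real)) \<le> \<bar>a\<bar> + \<bar>b\<bar> + \<bar>c\<bar>"
  using norm_Pair_le[of a "(b,c)"] norm_Pair_le[of b c] by simp

lemma pdet_le: "\<bar>pdet a b\<bar> \<le> 2 * norm a * norm b"
proof -
  have "\<bar>pdet a b\<bar> \<le> \<bar>xc a\<bar> * \<bar>yc b\<bar> + \<bar>yc a\<bar> * \<bar>xc b\<bar>"
    unfolding pdet_def by (metis abs_mult abs_triangle_ineq4)
  also have "\<dots> \<le> norm a * norm b + norm a * norm b"
    by (intro add_mono mult_mono coord_le) auto
  finally show ?thesis by simp
qed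

lemma decomp:
  "Bmap P0 P1 (s,t,u) - Bmap P0 P1 (s',t',u') =
    (s - s') *\<^sub>R vq (Pu P0 P1 u) t + (t - t') *\<^sub>R wq (Pu P0 P1 u) s'
    + (u - u') *\<^sub>R (Qq P1 s' t' - Qq P0 s' t')"
  by (simp add: Bmap_def Qq_def vq_def wq_def Pu_def algebra_simps)


lemma det_interp:
  fixes P :: "nat \<Rightarrow> pt3"
  shows "pdet (vq P t) (wq P s) = (1-t) * (1-s) * pdet (P 1 - P 0) (P 3 - P 0)
     + (1-t) * s * pdet (P 2 - P 1) (P 0 - P 1) + t * s * pdet (P 3 - P 2) (P 1 - P 2)
     + t * (1-s) * pdet (P 0 - P 3) (P 2 - P 3)"
  unfolding vq_def wq_def pdet_def coord_lin by (simp add: algebra_simps)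

lemma convex4:
  fixes a b c d J s t :: real
  assumes "J \<le> a" "J \<le> b" "J \<le> c" "J \<le> d" "0 \<le> s" "s \<le> 1" "0 \<le> t" "t \<le> 1"
  shows "J \<le> (1-t) * (1-s) * a + (1-t) * s * b + t * s * c + t * (1-s) * d"
proof -
  have "(1-t) * (1-s) * J \<le> (1-t) * (1-s) * a" using assms by (intro mult_left_mono) auto
  moreover have "(1-t) * s * J \<le> (1-t) * s * b" using assms by (intro mult_left_mono) auto
  moreover have "t * s * J \<le> t * s * c" using assms by (intro mult_left_mono) auto
  moreover have "t * (1-s) * J \<le> t * (1-s) * d" using assms by (intro mult_left_mono) auto
  moreover have "J = (1-t) * (1-s) * J + (1-t) * s * J + t * s * J + t * (1-s) * J" by algebra
  ultimately show ?thesis by linarith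
qed

lemma Pu_norm:
  assumes "u \<in> {0..1}" "j \<le> 3"
  shows "norm (Pu P0 P1 u j) \<le> (\<Sum>i\<le>3. norm (P0 i) + norm (P1 i))"
proof -
  have "norm (Pu P0 P1 u j) \<le> (1-u) * norm (P0 j) + u * norm (P1 j)"
    unfolding Pu_def using assms by (metis (no_types, lifting) abs_of_nonneg atLeastAtMost_iff diff_ge_0_iff_ge norm_scaleR norm_triangle_ineq order_trans add_mono order_refl)
  also have "\<dots> \<le> norm (P0 j) + norm (P1 j)"
    using assms by (intro add_mono) (auto intro: mult_left_le_one_le)
  also have "\<dots> \<le> (\<Sum>i\<le>3. norm (P0 i) + norm (P1 i))"
    using assms by (intro member_le_sum) auto
  finally show ?thesis .
qed

lemma Jmin_le:
  assumes "u \<in> {0..1}" "j \<le> 3"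
  shows "Jmin P0 P1 \<le> pdet (Pu P0 P1 u ((j + 1) mod 4) - Pu P0 P1 u j)
                          (Pu P0 P1 u ((j + 3) mod 4) - Pu P0 P1 u j)"
proof -
  define K where "K = (\<Sum>i\<le>3. norm (P0 i) + norm (P1 i))"
  have nb: "norm (Pu P0 P1 u' a - Pu P0 P1 u' b) \<le> 2*K" if "u' \<in> {0..1}" "a \<le> 3" "b \<le> 3" for u' a b
    using Pu_norm[OF that(1,2), of P0 P1] Pu_norm[OF that(1,3), of P0 P1] norm_triangle_ineq4[of "Pu P0 P1 u' a" "Pu P0 P1 u' b"]
    unfolding K_def by linarith
  have "bdd_below {pdet (Pu P0 P1 u ((j + 1) mod 4) - Pu P0 P1 u j)
                          (Pu P0 P1 u ((j + 3) mod 4) - Pu P0 P1 u j)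
                     | j u. j \<le> 3 \<and> u \<in> {0..1}}"
  proof (rule bdd_belowI[where m = "- (2 * (2*K) * (2*K))"], clarify)
    fix j' u' assume h: "j' \<le> (3::nat)" "u' \<in> {0..(1::real)}"
    let ?a = "Pu P0 P1 u' ((j' + 1) mod 4) - Pu P0 P1 u' j'"
    let ?b = "Pu P0 P1 u' ((j' + 3) mod 4) - Pu P0 P1 u' j'"
    have "norm ?a \<le> 2*K" by (rule nb) (use h in auto)
    moreover have "norm ?b \<le> 2*K" by (rule nb) (use h in auto)
    moreover have "0 \<le> K" unfolding K_def by (intro sum_nonneg) auto
    ultimately have "2 * norm ?a * norm ?b \<le> 2 * (2*K) * (2*K)"
      by (intro mult_mono) auto
    then show "- (2 * (2*K) * (2*K)) \<le> pdet ?a ?b" using pdet_le[of ?a ?b] by linarith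
  qed
  then show ?thesis unfolding Jmin_def by (rule cInf_lower[rotated]) (use assms in blast)
qed

lemma det_lower:
  assumes "u \<in> {0..1}" "s \<in> {0..1}" "t \<in> {0..1}"
  shows "Jmin P0 P1 \<le> pdet (vq (Pu P0 P1 u) t) (wq (Pu P0 P1 u) s)"
proof -
  let ?P = "Pu P0 P1 u"
  have h0: "Jmin P0 P1 \<le> pdet (?P 1 - ?P 0) (?P 3 - ?P 0)"
    using Jmin_le[OF assms(1), of 0 P0 P1] by simp
  have h1: "Jmin P0 P1 \<le> pdet (?P 2 - ?P 1) (?P 0 - ?P 1)"
    using Jmin_le[OF assms(1), of 1 P0 P1] by (simp add: numeral_2_eq_2)
  have h2: "Jmin P0 P1 \<le> pdet (?P 3 - ?P 2) (?P 1 - ?P 2)"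
    using Jmin_le[OF assms(1), of 2 P0 P1] by simp
  have h3: "Jmin P0 P1 \<le> pdet (?P 0 - ?P 3) (?P 2 - ?P 3)"
    using Jmin_le[OF assms(1), of 3 P0 P1] by simp
  show ?thesis unfolding det_interp
    by (rule convex4[OF h0 h1 h2 h3]) (use assms in auto)
qed

lemma pt3_eq: "xc p = xc q \<Longrightarrow> yc p = yc q \<Longrightarrow> zc p = zc q \<Longrightarrow> p = (q::pt3)"
  by (cases p; cases q) (simp add: xc_def yc_def zc_def)

lemma norm4:
  fixes x y z w :: "'a::real_normed_vector"
  assumes "\<bar>a\<bar> \<le> 1" "\<bar>b\<bar> \<le> 1" "\<bar>c\<bar> \<le> 1" "\<bar>d\<bar> \<le> 1"
  shows "norm (a *\<^sub>R x + b *\<^sub>R y + c *\<^sub>R z + d *\<^sub>R w) \<le> norm x + norm y + norm z + norm w"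
proof -
  have "norm (a *\<^sub>R x + b *\<^sub>R y + c *\<^sub>R z + d *\<^sub>R w)
     \<le> norm (a *\<^sub>R x) + norm (b *\<^sub>R y) + norm (c *\<^sub>R z) + norm (d *\<^sub>R w)"
    using norm_triangle_ineq[of "a *\<^sub>R x + b *\<^sub>R y + c *\<^sub>R z" "d *\<^sub>R w"]
      norm_triangle_ineq[of "a *\<^sub>R x + b *\<^sub>R y" "c *\<^sub>R z"]
      norm_triangle_ineq[of "a *\<^sub>R x" "b *\<^sub>R y"] by linarith
  also have "\<dots> \<le> norm x + norm y + norm z + norm w"
    using assms by (intro add_mono) (auto intro: mult_left_le_one_le simp: mult_le_one)
  finally show ?thesis .
qed

lemma sumK: "(\<Sum>i\<le>(3::nat). f i) = f 0 + f 1 + f 2 + (f 3 :: real)"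
  by (simp add: numeral_3_eq_3 numeral_2_eq_2)

lemma vq_norm:
  assumes "u \<in> {0..1}" "t \<in> {0..1}"
  shows "norm (vq (Pu P0 P1 u) t) \<le> 4 * (\<Sum>i\<le>3. norm (P0 i) + norm (P1 i))"
proof -
  let ?P = "Pu P0 P1 u"
  have "vq ?P t = (1-t) *\<^sub>R ?P 1 + (-(1-t)) *\<^sub>R ?P 0 + t *\<^sub>R ?P 2 + (-t) *\<^sub>R ?P 3"
    unfolding vq_def by (simp add: algebra_simps)
  also have "norm \<dots> \<le> norm (?P 1) + norm (?P 0) + norm (?P 2) + norm (?P 3)"
    using assms by (intro norm4) auto
  also have "\<dots> \<le> 4 * (\<Sum>i\<le>3. norm (P0 i) + norm (P1 i))"
    using Pu_norm[OF assms(1), of 0 P0 P1] Pu_norm[OF assms(1), of 1 P0 P1]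
      Pu_norm[OF assms(1), of 2 P0 P1] Pu_norm[OF assms(1), of 3 P0 P1] by simp
  finally show ?thesis .
qed

lemma wq_norm:
  assumes "u \<in> {0..1}" "t \<in> {0..1}"
  shows "norm (wq (Pu P0 P1 u) t) \<le> 4 * (\<Sum>i\<le>3. norm (P0 i) + norm (P1 i))"
proof -
  let ?P = "Pu P0 P1 u"
  have "wq ?P t = (1-t) *\<^sub>R ?P 3 + (-(1-t)) *\<^sub>R ?P 0 + t *\<^sub>R ?P 2 + (-t) *\<^sub>R ?P 1"
    unfolding wq_def by (simp add: algebra_simps)
  also have "norm \<dots> \<le> norm (?P 3) + norm (?P 0) + norm (?P 2) + norm (?P 1)"
    using assms by (intro norm4) auto
  also have "\<dots> \<le> 4 * (\<Sum>i\<le>3. norm (P0 i) + norm (P1 i))"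
    using Pu_norm[OF assms(1), of 0 P0 P1] Pu_norm[OF assms(1), of 1 P0 P1]
      Pu_norm[OF assms(1), of 2 P0 P1] Pu_norm[OF assms(1), of 3 P0 P1] by simp
  finally show ?thesis .
qed

lemma Qq_norm:
  assumes "s \<in> {0..1}" "t \<in> {0..1}"
  shows "norm (Qq P s t) \<le> (\<Sum>i\<le>3. norm (P i))"
proof -
  have "Qq P s t = ((1-s)*(1-t)) *\<^sub>R P 0 + (s*(1-t)) *\<^sub>R P 1 + (s*t) *\<^sub>R P 2 + ((1-s)*t) *\<^sub>R P 3"
    by (rule pt3_eq; simp add: Qq_def vq_def wq_def; algebra)
  also have "norm \<dots> \<le> norm (P 0) + norm (P 1) + norm (P 2) + norm (P 3)"
    using assms by (intro norm4) (auto simp: abs_mult mult_le_one)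
  also have "\<dots> = (\<Sum>i\<le>3. norm (P i))" by (simp add: sumK)
  finally show ?thesis .
qed

lemma R_norm:
  assumes "s \<in> {0..1}" "t \<in> {0..1}"
  shows "norm (Qq P1 s t - Qq P0 s t) \<le> (\<Sum>i\<le>3. norm (P0 i) + norm (P1 i))"
  using Qq_norm[OF assms, of P1] Qq_norm[OF assms, of P0] norm_triangle_ineq4[of "Qq P1 s t" "Qq P0 s t"]
  by (simp add: sum.distrib)

lemma zc_Pu: "j \<le> 3 \<Longrightarrow> \<forall>j\<le>3. zc (P0 j) = 0 \<Longrightarrow> \<forall>j\<le>3. zc (P1 j) = 1 \<Longrightarrow> zc (Pu P0 P1 u j) = u"
  by (simp add: Pu_def)

lemma zc_parts:
  assumes "\<forall>j\<le>3. zc (P0 j) = 0" "\<forall>j\<le>3. zc (P1 j) = 1"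
  shows "zc (vq (Pu P0 P1 u) t) = 0" "zc (wq (Pu P0 P1 u) t) = 0"
    "zc (Qq P1 s t - Qq P0 s t) = 1"
  using assms by (simp_all add: vq_def wq_def Qq_def Pu_def)

lemma pdet_DW:
  "pdet (a *\<^sub>R V + b *\<^sub>R W + c *\<^sub>R R) W = a * pdet V W + c * pdet R W"
  "pdet V (a *\<^sub>R V + b *\<^sub>R W + c *\<^sub>R R) = b * pdet V W + c * pdet V R"
  unfolding pdet_def coord_lin by algebra+

theorem lemma4p2:
  fixes P0 P1 :: "nat \<Rightarrow> real \<times> real \<times> real"
  assumes "\<forall>j\<le>3. zc (P0 j) = 0"
      and "\<forall>j\<le>3. zc (P1 j) = 1"
      and "Jmin P0 P1 > 0"
  shows "bi_lipschitz_on ({0..1} \<times> {0..1} \<times> {0..1}) (Bmap P0 P1)"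
proof -
  define K where "K = (\<Sum>i\<le>3. norm (P0 i) + norm (P1 i))"
  have K0: "0 \<le> K" unfolding K_def by (intro sum_nonneg) auto
  define M where "M = 4 * K + 1"
  have M1: "1 \<le> M" using K0 unfolding M_def by simp
  define \<delta> where "\<delta> = Jmin P0 P1"
  have d0: "0 < \<delta>" using assms(3) unfolding \<delta>_def .
  define C where "C = 2 * M + 2 * M * M"
  have C0: "0 \<le> C" using M1 unfolding C_def by simp
  define L where "L = 3 * M + 2 * C / \<delta> + 1"
  have "0 \<le> 2 * C / \<delta>" using C0 d0 by simp
  then have L0: "0 < L" using M1 unfolding L_def by linarith
  show ?thesis unfolding bi_lipschitz_on_def
  proof (intro exI[of _ L] conjI L0 ballI)
    fix x y assume x: "x \<in> {0..1::real} \<times> {0..1::real} \<times> {0..1::real}"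
      and y: "y \<in> {0..1::real} \<times> {0..1::real} \<times> {0..1::real}"
    obtain s t u where xe: "x = (s,t,u)" by (cases x) auto
    obtain s' t' u' where ye: "y = (s',t',u')" by (cases y) auto
    have st: "s \<in> {0..1}" "t \<in> {0..1}" "u \<in> {0..1}" "s' \<in> {0..1}" "t' \<in> {0..1}" "u' \<in> {0..1}"
      using x y xe ye by auto
    define V where "V = vq (Pu P0 P1 u) t"
    define W where "W = wq (Pu P0 P1 u) s'"
    define R where "R = Qq P1 s' t' - Qq P0 s' t'"
    define D where "D = Bmap P0 P1 x - Bmap P0 P1 y"
    have Deq: "D = (s - s') *\<^sub>R V + (t - t') *\<^sub>R W + (u - u') *\<^sub>R R"
      unfolding D_def V_def W_def R_def xe ye by (rule decomp)
    have nV: "norm V \<le> M" using vq_norm[OF st(3) st(2), of P0 P1] unfolding V_def M_def K_def by simp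
    have nW: "norm W \<le> M" using wq_norm[OF st(3) st(4), of P0 P1] unfolding W_def M_def K_def by simp
    have nR: "norm R \<le> M" using R_norm[OF st(4) st(5), of P1 P0] K0 unfolding R_def M_def K_def by simp
    have dVW: "\<delta> \<le> pdet V W" using det_lower[OF st(3) st(4) st(2), of P0 P1] unfolding V_def W_def \<delta>_def .
    have zD: "zc D = u - u'" unfolding Deq V_def W_def R_def using zc_parts[OF assms(1,2)] by simp
    have dxy: "dist x y = norm (s - s', t - t', u - u')" unfolding xe ye dist_norm by simp
    have ds: "\<bar>s - s'\<bar> \<le> dist x y" "\<bar>t - t'\<bar> \<le> dist x y" "\<bar>u - u'\<bar> \<le> dist x y"
      unfolding dxy using coord_le[of "(s - s', t - t', u - u')"] by (simp_all add: xc_def yc_def zc_def)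
    have dsum: "dist x y \<le> \<bar>s - s'\<bar> + \<bar>t - t'\<bar> + \<bar>u - u'\<bar>"
      unfolding dxy by (rule norm3_le)
    have dD: "dist (Bmap P0 P1 x) (Bmap P0 P1 y) = norm D" unfolding D_def dist_norm ..
    have "norm D \<le> \<bar>s - s'\<bar> * norm V + \<bar>t - t'\<bar> * norm W + \<bar>u - u'\<bar> * norm R"
      unfolding Deq using norm_triangle_ineq[of "(s - s') *\<^sub>R V + (t - t') *\<^sub>R W" "(u - u') *\<^sub>R R"]
        norm_triangle_ineq[of "(s - s') *\<^sub>R V" "(t - t') *\<^sub>R W"] by simp
    also have "\<dots> \<le> dist x y * M + dist x y * M + dist x y * M"
      using ds nV nW nR by (intro add_mono mult_mono) auto
    also have "\<dots> \<le> L * dist x y"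
      using C0 d0 zero_le_dist[of x y] unfolding L_def by (simp add: algebra_simps)
    finally have up: "norm D \<le> L * dist x y" .
    have du: "\<bar>u - u'\<bar> \<le> norm D" using coord_le(3)[of D] zD by simp
    have bs: "\<bar>s - s'\<bar> * \<delta> \<le> C * norm D"
    proof -
      have "\<bar>s - s'\<bar> * \<delta> \<le> \<bar>s - s'\<bar> * pdet V W" using dVW by (intro mult_left_mono) auto
      also have "\<dots> = \<bar>(s - s') * pdet V W\<bar>" using dVW d0 by (simp add: abs_mult)
      also have "(s - s') * pdet V W = pdet D W - (u - u') * pdet R W"
        unfolding Deq pdet_DW by simp
      also have "\<bar>pdet D W - (u - u') * pdet R W\<bar> \<le> \<bar>pdet D W\<bar> + \<bar>u - u'\<bar> * \<bar>pdet R W\<bar>"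
        using abs_triangle_ineq4[of "pdet D W" "(u - u') * pdet R W"] by (simp add: abs_mult)
      also have "\<dots> \<le> 2 * norm D * M + norm D * (2 * M * M)"
      proof (intro add_mono mult_mono)
        show "\<bar>pdet D W\<bar> \<le> 2 * norm D * M"
        proof -
          have "2 * norm D * norm W \<le> 2 * norm D * M" using nW by (intro mult_left_mono) auto
          then show ?thesis using pdet_le[of D W] by linarith
        qed
        show "\<bar>pdet R W\<bar> \<le> 2 * M * M"
        proof -
          have "2 * norm R * norm W \<le> 2 * M * M" using nW nR M1 by (intro mult_mono) auto
          then show ?thesis using pdet_le[of R W] by linarith
        qed
      qed (use du M1 in auto)
      also have "\<dots> = C * norm D" unfolding C_def by (simp add: algebra_simps)
      finally show ?thesis .
    qed
    have bt: "\<bar>t - t'\<bar> * \<delta> \<le> C * norm D"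
    proof -
      have "\<bar>t - t'\<bar> * \<delta> \<le> \<bar>t - t'\<bar> * pdet V W" using dVW by (intro mult_left_mono) auto
      also have "\<dots> = \<bar>(t - t') * pdet V W\<bar>" using dVW d0 by (simp add: abs_mult)
      also have "(t - t') * pdet V W = pdet V D - (u - u') * pdet V R"
        unfolding Deq pdet_DW by simp
      also have "\<bar>pdet V D - (u - u') * pdet V R\<bar> \<le> \<bar>pdet V D\<bar> + \<bar>u - u'\<bar> * \<bar>pdet V R\<bar>"
        using abs_triangle_ineq4[of "pdet V D" "(u - u') * pdet V R"] by (simp add: abs_mult)
      also have "\<dots> \<le> 2 * norm D * M + norm D * (2 * M * M)"
      proof (intro add_mono mult_mono)
        show "\<bar>pdet V D\<bar> \<le> 2 * norm D * M"
        proof -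
          have "2 * norm V * norm D \<le> 2 * M * norm D" using nV by (intro mult_right_mono) auto
          then show ?thesis using pdet_le[of V D] by (simp add: mult.commute mult.left_commute)
        qed
        show "\<bar>pdet V R\<bar> \<le> 2 * M * M"
        proof -
          have "2 * norm V * norm R \<le> 2 * M * M" using nV nR M1 by (intro mult_mono) auto
          then show ?thesis using pdet_le[of V R] by linarith
        qed
      qed (use du M1 in auto)
      also have "\<dots> = C * norm D" unfolding C_def by (simp add: algebra_simps)
      finally show ?thesis .
    qed
    have "\<bar>s - s'\<bar> \<le> C / \<delta> * norm D" using bs d0 by (simp add: field_simps)
    moreover have "\<bar>t - t'\<bar> \<le> C / \<delta> * norm D" using bt d0 by (simp add: field_simps)
    moreover have "(2 * C / \<delta> + 1) * norm D = C / \<delta> * norm D + C / \<delta> * norm D + norm D"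
      by (simp add: algebra_simps)
    ultimately have "dist x y \<le> (2 * C / \<delta> + 1) * norm D" using dsum du by linarith
    also have "\<dots> \<le> L * norm D" unfolding L_def using M1 by (intro mult_right_mono) auto
    finally have low: "dist x y \<le> L * norm D" .
    show "dist x y \<le> L * dist (Bmap P0 P1 x) (Bmap P0 P1 y)" using low dD by simp
    show "dist (Bmap P0 P1 x) (Bmap P0 P1 y) \<le> L * dist x y" using up dD by simp
  qed
qed

end
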